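(* Let $q$ be a prime power and let $\mathcal{C}$ be a $\mathcal{GRS}(n,k,d)$ code over $\mathbb{F}_q$ with $d=n-k+1$, distinct evaluation points $\alpha_0,\dots,\alpha_{n-1}\in\mathbb{F}_q$ and non-zero column multipliers $v_0,\dots,v_{n-1}$. Let $\vec c\in\mathcal{C}$ and $\vec r\in\mathbb{F}_q^n$, let $E=\{i : c_i\neq r_i\}$, $\epsilon=|E|$, and assume $\epsilon>d/2$. Let $\Lambda(x)=\prod_{i\in E}(x-\alpha_i)$. Let $H_1(x),H_2(x)\in\mathbb{F}_q[x]$ be coprime polynomials and $A(x),B(x)\in\mathbb{F}_q[x]$ polynomials such that $$\Lambda(x)=A(x)H_1(x)+B(x)H_2(x),\qquad \deg A=\epsilon-\deg H_1,\qquad \deg B\le \epsilon-d+\deg H_1 .$$ Let $L\le n$, $\tau$ and $\tau_L$ be positive integers, put $w_1=\tau-\deg H_1$ and $w_2=\tau-d+\deg H_1$, and assume $w_1,w_2\ge 0$. For $i=0,\dots,L-1$ let $P_i=(H_2(\alpha_i):-H_1(\alpha_i))\in\mathbb{P}^1_{\mathbb{F}_q}$. If $$\tau_L^2>L(2\tau-d),$$ then there exist positive integers $s,\ell$ and a non-zero polynomial $Q(x,y,z)=\sum_{j=0}^{\ell}Q_j(x)y^jz^{\ell-j}$ with $Q_j\in\mathbb{F}_q[x]$ such that $Q$ has a zero of multiplicity at least $s$ at $(\alpha_i,P_i)$ for every $i=0,\dots,L-1$ and $\deg_{(1,w_1,w_2)}Q<s\tau_L$. Furthermore, letting $\epsilon_L=|E\cap\{0,\dots,L-1\}|$,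 if $\epsilon=\tau$ and $\epsilon_L=\tau_L$, then every such $Q$ satisfies $Q(x,A(x),B(x))=0$.
   Context: A generalised Reed–Solomon code $\mathcal{GRS}(n,k,d)$ over $\mathbb{F}_q$ is $\{(v_0C(\alpha_0),\dots,v_{n-1}C(\alpha_{n-1})) : C\in\mathbb{F}_q[x],\ \deg C<k\}$. In the paper, $H_1,H_2$ are intermediate polynomials of the Extended Euclidean Algorithm run on $x^{d-1}$ and the syndrome polynomial of $\vec r$, and positions are indexed so that positions $0,\dots,L-1$ are the $L$ least reliable ones; only the stated properties are used. Points of $\mathbb{P}^1_{\mathbb{F}_q}$ are pairs $(a:b)\neq(0:0)$ up to non-zero scalar multiples. The $(1,w_1,w_2)$-weighted degree of $x^uy^jz^h$ is $u+w_1j+w_2h$, and of a polynomial the maximum over its monomials. A homogeneous $Q(x,y,z)$ has a zero of multiplicity at least $s$ at $(\alpha,(a:b))\in\mathbb{F}_q\times\mathbb{P}^1_{\mathbb{F}_q}$ if: when $b\neq0$, the polynomial $Q(x+\alpha,\,y+a/b,\,1)\in\mathbb{F}_q[x,y]$ has no monomial $x^uy^v$ with $u+v<s$; when $b=0$, the polynomial $Q(x+\alpha,1,z+0)\in\mathbb{F}_q[x,z]$ has no monomial $x^uz^v$ with $u+v<s$. *)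

theory Defs
  imports "HOL-Computational_Algebra.Computational_Algebra"
begin

text \<open>A homogeneous polynomial Q(x,y,z) = sum_{j=0..l} Q_j(x) y^j z^(l-j) is represented
  by its degree l in (y,z) and the coefficient family Q :: nat => 'a poly (only j <= l matter).\<close>

definition hnonzero :: "nat \<Rightarrow> (nat \<Rightarrow> 'a::zero poly) \<Rightarrow> bool" where
  "hnonzero l Q \<longleftrightarrow> (\<exists>j\<le>l. Q j \<noteq> 0)"

text \<open>Coefficient of x^u y^v in Q(x+alpha, y+t, 1).\<close>
definition shift_coeff_y :: "nat \<Rightarrow> (nat \<Rightarrow> 'a::comm_ring_1 poly) \<Rightarrow> 'a \<Rightarrow> 'a \<Rightarrow> nat \<Rightarrow> nat \<Rightarrow> 'a" where
  "shift_coeff_y l Q alpha t u v =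
     (\<Sum>j\<le>l. coeff (pcompose (Q j) [:alpha, 1:]) u * coeff ([:t, 1:] ^ j) v)"

text \<open>Coefficient of x^u z^v in Q(x+alpha, 1, z+0).\<close>
definition shift_coeff_z :: "nat \<Rightarrow> (nat \<Rightarrow> 'a::comm_ring_1 poly) \<Rightarrow> 'a \<Rightarrow> nat \<Rightarrow> nat \<Rightarrow> 'a" where
  "shift_coeff_z l Q alpha u v =
     (\<Sum>j\<le>l. coeff (pcompose (Q j) [:alpha, 1:]) u * coeff ([:0, 1:] ^ (l - j)) v)"

definition zero_mult_ge :: "nat \<Rightarrow> (nat \<Rightarrow> 'a::field poly) \<Rightarrow> 'a \<Rightarrow> 'a \<Rightarrow> 'a \<Rightarrow> nat \<Rightarrow> bool" where
  "zero_mult_ge l Q alpha a b s =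
     (if b \<noteq> 0 then (\<forall>u v. u + v < s \<longrightarrow> shift_coeff_y l Q alpha (a / b) u v = 0)
      else (\<forall>u v. u + v < s \<longrightarrow> shift_coeff_z l Q alpha u v = 0))"

definition wdeg :: "int \<Rightarrow> int \<Rightarrow> nat \<Rightarrow> (nat \<Rightarrow> 'a::zero poly) \<Rightarrow> int" where
  "wdeg w1 w2 l Q = Max {int (degree (Q j)) + w1 * int j + w2 * int (l - j) | j. j \<le> l \<and> Q j \<noteq> 0}"

definition heval :: "nat \<Rightarrow> (nat \<Rightarrow> 'a::comm_semiring_1 poly) \<Rightarrow> 'a poly \<Rightarrow> 'a poly \<Rightarrow> 'a poly" where
  "heval l Q A B = (\<Sum>j\<le>l. Q j * A ^ j * B ^ (l - j))"

definition GRS :: "nat \<Rightarrow> nat \<Rightarrow> (nat \<Rightarrow> 'a::comm_ring_1) \<Rightarrow> (nat \<Rightarrow> 'a) \<Rightarrow> (nat \<Rightarrow> 'a) set" where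
  "GRS n k alpha v = {c. \<exists>C. (C = 0 \<or> degree C < k) \<and>
       (\<forall>i<n. c i = v i * poly C (alpha i)) \<and> (\<forall>i\<ge>n. c i = 0)}"

end

theory Submission
  imports Defs
begin


lemma pcompose_x_power: "pcompose ([:0,1:]^n) p = p ^ n"
  by (induction n) (simp_all add: pcompose_mult pcompose_pCons pcompose_1)

lemma expand_shift:
  fixes g :: "'a::field poly"
  assumes "degree g \<le> N"
  shows "g = (\<Sum>u\<le>N. smult (coeff (pcompose g [:\<alpha>,1:]) u) ([:-\<alpha>,1:]^u))"
proof -
  let ?h = "pcompose g [:\<alpha>,1:]"
  have dh: "degree ?h \<le> N" using assms by (simp add: degree_pcompose)
  have "pcompose ?h [:-\<alpha>,1:] = g"
    by (simp add: pcompose_assoc[symmetric] pcompose_pCons)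
  moreover have "?h = (\<Sum>u\<le>N. monom (coeff ?h u) u)"
    using poly_as_sum_of_monoms'[OF dh] by simp
  ultimately have "g = pcompose (\<Sum>u\<le>N. monom (coeff ?h u) u) [:-\<alpha>,1:]" by simp
  also have "\<dots> = (\<Sum>u\<le>N. smult (coeff ?h u) ([:-\<alpha>,1:]^u))"
    by (simp add: pcompose_sum monom_altdef pcompose_smult pcompose_x_power)
  finally show ?thesis .
qed

lemma key_dvd:
  fixes Q F :: "nat \<Rightarrow> 'a::field poly" and D E :: "'a poly" and b :: "nat \<Rightarrow> nat \<Rightarrow> 'a"
  assumes F: "\<forall>j\<le>l. F j = (\<Sum>v\<le>l. smult (b j v) (D^v * E^(l-v)))"
    and pD: "[:-\<alpha>,1:] dvd D"
    and Z: "\<forall>u v. u + v < s \<longrightarrow> (\<Sum>j\<le>l. coeff (pcompose (Q j) [:\<alpha>,1:]) u * b j v) = 0"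
  shows "[:-\<alpha>,1:]^s dvd (\<Sum>j\<le>l. Q j * F j)"
proof -
  define p where "p = [:-\<alpha>,1:]"
  define N where "N = (\<Sum>j\<le>l. degree (Q j))"
  define c where "c j u = coeff (pcompose (Q j) [:\<alpha>,1:]) u" for j u
  define M where "M u v = p^u * (D^v * E^(l-v))" for u v
  have QN: "Q j = (\<Sum>u\<le>N. smult (c j u) (p^u))" if "j \<le> l" for j
  proof -
    have "degree (Q j) \<le> N" unfolding N_def
      using that by (intro member_le_sum) auto
    then show ?thesis unfolding c_def p_def by (rule expand_shift)
  qed
  have "(\<Sum>j\<le>l. Q j * F j) = (\<Sum>j\<le>l. (\<Sum>u\<le>N. smult (c j u) (p^u)) * (\<Sum>v\<le>l. smult (b j v) (D^v * E^(l-v))))"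
    using QN F by (intro sum.cong) auto
  also have "\<dots> = (\<Sum>j\<le>l. \<Sum>u\<le>N. \<Sum>v\<le>l. smult (b j v * c j u) (M u v))"
    unfolding sum_product M_def by (simp add: mult_smult_left mult_smult_right mult.assoc)
  also have "\<dots> = (\<Sum>u\<le>N. \<Sum>j\<le>l. \<Sum>v\<le>l. smult (b j v * c j u) (M u v))"
    by (rule sum.swap)
  also have "\<dots> = (\<Sum>u\<le>N. \<Sum>v\<le>l. \<Sum>j\<le>l. smult (b j v * c j u) (M u v))"
    by (rule sum.cong[OF refl], rule sum.swap)
  also have "\<dots> = (\<Sum>u\<le>N. \<Sum>v\<le>l. smult (\<Sum>j\<le>l. b j v * c j u) (M u v))"
    by (simp add: smult_sum)
  finally have eq: "(\<Sum>j\<le>l. Q j * F j) = (\<Sum>u\<le>N. \<Sum>v\<le>l. smult (\<Sum>j\<le>l. b j v * c j u) (M u v))" .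
  have "p^s dvd smult (\<Sum>j\<le>l. b j v * c j u) (M u v)" for u v
  proof (cases "u + v < s")
    case True
    then have "(\<Sum>j\<le>l. b j v * c j u) = 0" using Z unfolding c_def by (simp add: mult.commute)
    then show ?thesis by simp
  next
    case False
    obtain D' where D': "D = p * D'" using pD unfolding p_def by blast
    have "M u v = p^(u+v) * (D'^v * E^(l-v))"
      unfolding M_def D' by (simp add: power_mult_distrib power_add mult_ac)
    moreover have "p^s dvd p^(u+v)" using False by (simp add: le_imp_power_dvd)
    ultimately show ?thesis by (simp add: dvd_smult)
  qed
  then show ?thesis unfolding eq p_def[symmetric] by (intro dvd_sum) auto
qed



lemma coeff_lin_pow:
  fixes t :: "'a::comm_ring_1"
  shows "coeff ([:t,1:]^j) v = of_nat (j choose v) * t^(j-v)"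
proof -
  have e: "[:t,1:] = [:0,1:] + [:t:]" by simp
  have "[:t,1:]^j = (\<Sum>k\<le>j. of_nat (j choose k) * [:0,1:]^k * [:t:]^(j-k))"
    unfolding e by (rule binomial_ring)
  also have "\<dots> = (\<Sum>k\<le>j. monom (of_nat (j choose k) * t^(j-k)) k)"
    by (intro sum.cong refl) (simp add: monom_altdef of_nat_mult_conv_smult poly_const_pow
       mult.commute[of "[:0,1:]^_"] flip: smult_smult; simp add: smult_smult mult.commute)
  finally have "coeff ([:t,1:]^j) v = (\<Sum>k\<le>j. coeff (monom (of_nat (j choose k) * t^(j-k)) k) v)"
    by (simp add: coeff_sum)
  also have "\<dots> = of_nat (j choose v) * t^(j-v)"
    by (simp add: coeff_monom binomial_eq_0)
  finally show ?thesis .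
qed

lemma y_ident:
  fixes A B :: "'a::field poly"
  assumes "j \<le> l"
  shows "A^j * B^(l-j) = (\<Sum>v\<le>l. smult (coeff ([:t,1:]^j) v) ((A - smult t B)^v * B^(l-v)))"
proof -
  define D where "D = A - smult t B"
  have AD: "A = D + smult t B" unfolding D_def by simp
  have "A^j * B^(l-j) = (\<Sum>k\<le>j. of_nat (j choose k) * D^k * (smult t B)^(j-k)) * B^(l-j)"
    unfolding AD by (simp add: binomial_ring)
  also have "\<dots> = (\<Sum>k\<le>j. smult (of_nat (j choose k) * t^(j-k)) (D^k * B^(l-k)))"
    unfolding sum_distrib_right
  proof (intro sum.cong refl)
    fix k assume k: "k \<in> {..j}"
    have "B^(j-k) * B^(l-j) = B^(l-k)" using k assms by (simp flip: power_add)
    then show "of_nat (j choose k) * D^k * (smult t B)^(j-k) * B^(l-j) = smult (of_nat (j choose k) * t^(j-k)) (D^k * B^(l-k))"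
      by (simp add: smult_power of_nat_mult_conv_smult mult.assoc flip: smult_smult)
        (simp add: smult_smult mult.commute)
  qed
  also have "\<dots> = (\<Sum>k\<le>l. smult (of_nat (j choose k) * t^(j-k)) (D^k * B^(l-k)))"
    using assms by (intro sum.mono_neutral_left) (auto simp: binomial_eq_0)
  finally show ?thesis unfolding D_def coeff_lin_pow .
qed

lemma z_ident:
  fixes A B :: "'a::field poly"
  assumes "j \<le> l"
  shows "A^j * B^(l-j) = (\<Sum>v\<le>l. smult (coeff ([:0,1:]^(l-j)) v) (B^v * A^(l-v)))"
proof -
  have "(\<Sum>v\<le>l. smult (coeff ([:0,1:]^(l-j)) v) (B^v * A^(l-v))) = (\<Sum>v\<le>l. if v = l - j then B^v * A^(l-v) else 0)"
    by (intro sum.cong refl) (simp add: monom_altdef[of 1, simplified, symmetric] coeff_monom)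
  also have "\<dots> = B^(l-j) * A^(l-(l-j))" by (simp add: sum.delta)
  finally show ?thesis using assms by (simp add: mult.commute)
qed



lemma not_both_zero:
  fixes H1 H2 :: "'a::field poly"
  assumes "coprime H1 H2" "poly H1 a = 0" "poly H2 a = 0"
  shows False
proof -
  have "[:-a,1:] dvd H1" "[:-a,1:] dvd H2" using assms by (simp_all add: poly_eq_0_iff_dvd)
  then have "is_unit [:-a,1:]" using assms(1) coprime_common_divisor by blast
  then show False by (simp add: is_unit_iff_degree)
qed

lemma part2_dvd:
  fixes Q :: "nat \<Rightarrow> 'a::field poly" and A B H1 H2 :: "'a poly"
  assumes cop: "coprime H1 H2"
    and root: "poly A \<alpha> * poly H1 \<alpha> + poly B \<alpha> * poly H2 \<alpha> = 0"
    and zm: "zero_mult_ge l Q \<alpha> (poly H2 \<alpha>) (- poly H1 \<alpha>) s"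
  shows "[:-\<alpha>,1:]^s dvd heval l Q A B"
proof -
  have hv: "heval l Q A B = (\<Sum>j\<le>l. Q j * (A^j * B^(l-j)))"
    unfolding heval_def by (simp add: mult.assoc)
  show ?thesis
  proof (cases "poly H1 \<alpha> = 0")
    case False
    define t where "t = poly H2 \<alpha> / (- poly H1 \<alpha>)"
    have Z: "\<forall>u v. u + v < s \<longrightarrow> (\<Sum>j\<le>l. coeff (pcompose (Q j) [:\<alpha>,1:]) u * coeff ([:t,1:]^j) v) = 0"
      using zm False unfolding zero_mult_ge_def shift_coeff_y_def t_def by simp
    have pD: "[:-\<alpha>,1:] dvd (A - smult t B)"
    proof -
      have "poly A \<alpha> = t * poly B \<alpha>" using root False unfolding t_def
        by (simp add: field_simps) (metis add.commute add_eq_0_iff mult.commute)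
      then show ?thesis by (simp add: poly_eq_0_iff_dvd[symmetric])
    qed
    show ?thesis unfolding hv
      by (rule key_dvd[OF _ pD Z, where E=B]) (simp add: y_ident)
  next
    case True
    then have "poly H2 \<alpha> \<noteq> 0" using not_both_zero[OF cop] by blast
    then have "poly B \<alpha> = 0" using root True by simp
    then have pD: "[:-\<alpha>,1:] dvd B" by (simp add: poly_eq_0_iff_dvd)
    have Z: "\<forall>u v. u + v < s \<longrightarrow> (\<Sum>j\<le>l. coeff (pcompose (Q j) [:\<alpha>,1:]) u * coeff ([:0,1:]^(l-j)) v) = 0"
      using zm True unfolding zero_mult_ge_def shift_coeff_z_def by simp
    show ?thesis unfolding hv
      by (rule key_dvd[OF _ pD Z, where E=A]) (simp add: z_ident)
  qed
qed

lemma wdeg_ge: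
  assumes "j \<le> l" "Q j \<noteq> 0"
  shows "int (degree (Q j)) + w1 * int j + w2 * int (l - j) \<le> wdeg w1 w2 l Q"
proof -
  have fin: "finite {int (degree (Q j)) + w1 * int j + w2 * int (l - j) | j. j \<le> l \<and> Q j \<noteq> 0}"
    by (rule finite_subset[of _ "(\<lambda>j. int (degree (Q j)) + w1 * int j + w2 * int (l - j)) ` {..l}"]) auto
  show ?thesis unfolding wdeg_def by (rule Max_ge[OF fin]) (use assms in blast)
qed

lemma heval_degree:
  fixes Q :: "nat \<Rightarrow> 'a::field poly"
  assumes hz: "hnonzero l Q" and w1: "0 \<le> w1" and w2: "0 \<le> w2"
    and dA: "int (degree A) \<le> w1" and dB: "int (degree B) \<le> w2"
  shows "int (degree (heval l Q A B)) \<le> wdeg w1 w2 l Q"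
proof -
  obtain j0 where j0: "j0 \<le> l" "Q j0 \<noteq> 0" using hz unfolding hnonzero_def by blast
  have W0: "0 \<le> wdeg w1 w2 l Q" 
  proof -
    have a: "0 \<le> w1 * int j0" "0 \<le> w2 * int (l - j0)" using w1 w2 by simp_all
    have "int (degree (Q j0)) + w1 * int j0 + w2 * int (l - j0) \<le> wdeg w1 w2 l Q"
      by (rule wdeg_ge[of j0 l Q]) (use j0 in auto)
    then show ?thesis using a by linarith
  qed
  have "degree (Q j * A^j * B^(l-j)) \<le> nat (wdeg w1 w2 l Q)" if j: "j \<in> {..l}" for j
  proof (cases "Q j = 0")
    case True then show ?thesis by simp
  next
    case False
    have "degree (Q j * A^j * B^(l-j)) \<le> degree (Q j) + j * degree A + (l-j) * degree B"
    proof -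
      have "degree (Q j * A^j * B^(l-j)) \<le> degree (Q j * A^j) + degree (B^(l-j))" by (rule degree_mult_le)
      also have "\<dots> \<le> degree (Q j) + degree (A^j) + degree (B^(l-j))"
        using degree_mult_le[of "Q j" "A^j"] by simp
      also have "\<dots> \<le> degree (Q j) + j * degree A + (l-j) * degree B"
        using degree_power_le[of A j] degree_power_le[of B "l-j"] by (simp add: mult.commute)
      finally show ?thesis .
    qed
    moreover have "int (degree (Q j) + j * degree A + (l-j) * degree B) \<le> int (degree (Q j)) + w1 * int j + w2 * int (l - j)"
    proof -
      have a: "int j * int (degree A) \<le> int j * w1" using dA by (intro mult_left_mono) auto
      have b: "int (l-j) * int (degree B) \<le> int (l-j) * w2" using dB by (intro mult_left_mono) auto
      have e: "int (degree (Q j) + j * degree A + (l-j) * degree B) = int (degree (Q j)) + int j * int (degree A) + int (l-j) * int (degree B)"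
        by (simp only: of_nat_add of_nat_mult)
      have c: "int j * w1 = w1 * int j" "int (l-j) * w2 = w2 * int (l-j)" by (simp_all only: mult.commute)
      show ?thesis unfolding e using a b c by linarith
    qed
    moreover have "\<dots> \<le> wdeg w1 w2 l Q" using wdeg_ge[of j l Q w1 w2] j False by simp
    ultimately show ?thesis by linarith
  qed
  then have "degree (heval l Q A B) \<le> nat (wdeg w1 w2 l Q)"
    unfolding heval_def by (intro degree_sum_le) auto
  then show ?thesis using W0 by linarith
qed

lemma roots_degree:
  fixes R :: "'a::field poly"
  assumes R: "R \<noteq> 0" and fin: "finite F" and inj: "inj_on \<alpha> F" and s: "0 < s"
    and dv: "\<forall>i\<in>F. [:-\<alpha> i,1:]^s dvd R"
  shows "s * card F \<le> degree R"
proof -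
  have ord: "s \<le> order x R" if "x \<in> \<alpha> ` F" for x
    using dv that R by (auto simp: order_divides)
  have sub: "\<alpha> ` F \<subseteq> {x. poly R x = 0}"
  proof
    fix x assume x: "x \<in> \<alpha> ` F"
    then have "0 < order x R" using ord s by (meson less_le_trans)
    then show "x \<in> {x. poly R x = 0}" using R by (simp add: order_root)
  qed
  have "s * card F = (\<Sum>x\<in>\<alpha> ` F. s)" using card_image[OF inj] by simp
  also have "\<dots> \<le> (\<Sum>x\<in>\<alpha> ` F. order x R)" by (intro sum_mono ord)
  also have "\<dots> \<le> (\<Sum>x | poly R x = 0. order x R)"
    by (intro sum_mono2 sub) (auto simp: poly_roots_finite R)
  also have "\<dots> \<le> degree R" by (rule sum_order_le_degree[OF R])
  finally show ?thesis .
qed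



lemma sum_int_id2: "2 * (\<Sum>j\<le>l. int j) = int l * (int l + 1)"
  by (induction l) (simp_all add: algebra_simps)

lemma sum_reflect: "(\<Sum>j\<le>l. f (l - j)) = (\<Sum>j\<le>(l::nat). f j)"
  by (rule sum.reindex_bij_witness[where i="\<lambda>i. l - i" and j="\<lambda>i. l - i"]) auto

lemma sum_tri2: "2 * (\<Sum>u<s. (s - u)) = s * (s + (1::nat))"
proof -
  have "(\<Sum>u<s. (s - u)) = (\<Sum>u<s. Suc u)"
    by (rule sum.reindex_bij_witness[where i="\<lambda>i. s - Suc i" and j="\<lambda>i. s - Suc i"]) auto
  moreover have "2 * (\<Sum>u<s. Suc u) = s * (s + 1)" by (induction s) simp_all
  ultimately show ?thesis by simp
qed

lemma choose_params:
  fixes T W :: int and L :: nat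
  assumes T: "0 < T" and W: "0 \<le> W" and L: "0 < L" and main: "T^2 > int L * W"
  shows "\<exists>s l :: nat. 0 < s \<and> 0 < l \<and>
     int L * int s * (int s + 1) < (int l + 1) * (2 * int s * T - W * int l)"
proof (cases "W = 0")
  case True
  show ?thesis
  proof (intro exI conjI)
    show "int L * int 1 * (int 1 + 1) < (int (L+1) + 1) * (2 * int 1 * T - W * int (L+1))"
    proof -
      have a: "(int L + 2) * 2 \<le> (int L + 2) * (2 * T)" using T by (intro mult_left_mono) auto
      have b: "int L * int 1 * (int 1 + 1) < (int L + 2) * 2" by simp
      have c: "(int (L+1) + 1) * (2 * int 1 * T - W * int (L+1)) = (int L + 2) * (2*T)" using True by simp
      show ?thesis using a b c by linarith
    qed
  qed (use L in auto)
next
  case False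
  then have Wp: "0 < W" using W by simp
  define m :: int where "m = int L + 1"
  have mp: "0 < m" unfolding m_def by simp
  define s where "s = nat (W * m)"
  define l where "l = nat (T * m)"
  have si: "int s = W * m" unfolding s_def using Wp mp by simp
  have li: "int l = T * m" unfolding l_def using T mp by simp
  have g1: "T^2 - int L * W \<ge> 1" using main by simp
  have k: "m * (T^2 - int L * W) \<ge> m" using g1 mp by (simp add: mult_le_cancel_left1)
  have e1: "(T*m+1)*T - int L*(W*m+1) = m*(T^2 - int L*W) + T - int L"
    by (simp add: algebra_simps power2_eq_square)
  have pos: "(T*m+1)*T - int L*(W*m+1) > 0" using e1 k T unfolding m_def by linarith
  have e2: "(int l + 1) * (2 * int s * T - W * int l) - int L * int s * (int s + 1)
      = W * m * ((T*m+1)*T - int L*(W*m+1))"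
    unfolding si li by (simp add: algebra_simps)
  have "W * m * ((T*m+1)*T - int L*(W*m+1)) > 0" using Wp mp pos by simp
  then have "int L * int s * (int s + 1) < (int l + 1) * (2 * int s * T - W * int l)"
    using e2 by linarith
  moreover have "0 < s" using si Wp mp by (metis of_nat_0_less_iff mult_pos_pos)
  moreover have "0 < l" using li T mp by (metis of_nat_0_less_iff mult_pos_pos)
  ultimately show ?thesis by blast
qed



lemma card_field_gt1: "1 < card (UNIV::'a::{finite,field} set)"
proof -
  have "card {0::'a, 1} \<le> card (UNIV::'a set)" by (rule card_mono) auto
  then show ?thesis by simp
qed

lemma existence:
  fixes \<alpha> :: "nat \<Rightarrow> 'a::{finite,field}" and H1 H2 :: "'a poly" and w1 w2 T :: int
  assumes w1: "0 \<le> w1" and w2: "0 \<le> w2"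
    and cnt: "int L * int s * (int s + 1) < (int l + 1) * (2 * int s * T - (w1 + w2) * int l)"
  shows "\<exists>Q. hnonzero l Q \<and> (\<forall>i<L. zero_mult_ge l Q (\<alpha> i) (poly H2 (\<alpha> i)) (- poly H1 (\<alpha> i)) s)
          \<and> wdeg w1 w2 l Q < int s * T"
proof -
  define K where "K i Q u v = (if - poly H1 (\<alpha> i) \<noteq> 0
      then shift_coeff_y l Q (\<alpha> i) (poly H2 (\<alpha> i) / (- poly H1 (\<alpha> i))) u v
      else shift_coeff_z l Q (\<alpha> i) u v)" for i Q u v
  have zmK: "zero_mult_ge l Q (\<alpha> i) (poly H2 (\<alpha> i)) (- poly H1 (\<alpha> i)) s \<longleftrightarrow> (\<forall>u v. u+v<s \<longrightarrow> K i Q u v = 0)" for i Q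
    unfolding zero_mult_ge_def K_def by simp
  have Klin: "K i (\<lambda>j. P j - R j) u v = K i P u v - K i R u v" for i P R u v
    unfolding K_def shift_coeff_y_def shift_coeff_z_def
    by (simp add: pcompose_diff sum_subtractf left_diff_distrib)
  define e where "e j = int s * T - w1 * int j - w2 * int (l - j)" for j
  define S where "S = (SIGMA j:{..l}. {..<nat (e j)})"
  define Qf where "Qf f j = (\<Sum>u\<in>{..<nat (e j)}. monom (f (j,u)) u)" for f :: "nat \<times> nat \<Rightarrow> 'a" and j
  have cQf: "coeff (Qf f j) k = (if k < nat (e j) then f (j,k) else 0)" for f j k
    unfolding Qf_def by (simp add: coeff_sum coeff_monom)
  define I where "I = {..<L} \<times> (SIGMA u:{..<s}. {..<s-u})"
  define \<Phi> where "\<Phi> f = restrict (\<lambda>(i,u,v). K i (Qf f) u v) I" for f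
  define U where "U = PiE S (\<lambda>_. (UNIV :: 'a set))"
  define V where "V = PiE I (\<lambda>_. (UNIV :: 'a set))"
  have finS: "finite S" unfolding S_def by auto
  have finI: "finite I" unfolding I_def by auto
  have cardU: "card U = card (UNIV::'a set) ^ card S" unfolding U_def by (simp add: card_PiE finS)
  have cardV: "card V = card (UNIV::'a set) ^ card I" unfolding V_def by (simp add: card_PiE finI)
  have count: "card I < card S"
  proof -
    have cI: "card I = L * (\<Sum>u<s. s - u)" unfolding I_def by (simp add: card_cartesian_product)
    have cI2: "2 * int (card I) = int L * int s * (int s + 1)"
    proof -
      have "2 * card I = L * (s * (s + 1))" unfolding cI using sum_tri2[of s] by (simp add: mult_ac)
      then have "int (2 * card I) = int (L * (s * (s + 1)))" by simp
      then show ?thesis by (simp add: algebra_simps)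
    qed
    have cS: "int (card S) = (\<Sum>j\<le>l. int (nat (e j)))" unfolding S_def by simp
    have le: "(\<Sum>j\<le>l. e j) \<le> (\<Sum>j\<le>l. int (nat (e j)))" by (intro sum_mono) simp
    have refl: "(\<Sum>j\<le>l. int (l - j)) = (\<Sum>j\<le>l. int j)" by (rule sum_reflect)
    have "(\<Sum>j\<le>l. e j) = (\<Sum>j\<le>l. int s * T) - w1 * (\<Sum>j\<le>l. int j) - w2 * (\<Sum>j\<le>l. int (l - j))"
    proof -
      have "(\<Sum>j\<le>l. e j) = (\<Sum>j\<le>l. int s * T) - (\<Sum>j\<le>l. w1 * int j) - (\<Sum>j\<le>l. w2 * int (l - j))"
        unfolding e_def by (simp only: sum_subtractf)
      then show ?thesis by (simp only: sum_distrib_left[symmetric])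
    qed
    then have "2 * (\<Sum>j\<le>l. e j) = 2 * ((int l + 1) * (int s * T)) - w1 * (2 * (\<Sum>j\<le>l. int j)) - w2 * (2 * (\<Sum>j\<le>l. int j))"
      unfolding refl by (simp add: algebra_simps)
    also have "\<dots> = (int l + 1) * (2 * int s * T - (w1 + w2) * int l)"
      unfolding sum_int_id2 by (simp add: algebra_simps)
    finally have "2 * (\<Sum>j\<le>l. e j) = (int l + 1) * (2 * int s * T - (w1 + w2) * int l)" .
    then have "2 * int (card I) < 2 * int (card S)" using cI2 cnt le cS by linarith
    then show ?thesis by simp
  qed
  have "card V < card U" unfolding cardU cardV
    by (rule power_strict_increasing[OF count card_field_gt1])
  moreover have sub: "\<Phi> ` U \<subseteq> V" unfolding V_def \<Phi>_def by auto
  ultimately have "\<not> inj_on \<Phi> U"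
    using card_inj_on_le[of \<Phi> U V] V_def finI by (auto simp: finite_PiE)
  then obtain f g where f: "f \<in> U" and g: "g \<in> U" and fg: "f \<noteq> g" and eq: "\<Phi> f = \<Phi> g"
    unfolding inj_on_def by blast
  define Q where "Q j = Qf f j - Qf g j" for j
  have cQ: "coeff (Q j) k = (if k < nat (e j) then f (j,k) - g (j,k) else 0)" for j k
    unfolding Q_def by (simp add: cQf)
  have hz: "hnonzero l Q"
  proof -
    obtain x where x: "f x \<noteq> g x" using fg by blast
    have "x \<in> S"
    proof (rule ccontr)
      assume "x \<notin> S"
      then have "f x = undefined" "g x = undefined" using f g \<open>x \<notin> S\<close> unfolding U_def by (meson PiE_arb)+
      then show False using x by simp
    qed
    then obtain j u where xj: "x = (j,u)" "j \<le> l" "u < nat (e j)" unfolding S_def by auto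
    have "coeff (Q j) u \<noteq> 0" using cQ[of j u] xj x by simp
    then have "Q j \<noteq> 0" by auto
    then show ?thesis unfolding hnonzero_def using xj by blast
  qed
  have zm: "\<forall>i<L. zero_mult_ge l Q (\<alpha> i) (poly H2 (\<alpha> i)) (- poly H1 (\<alpha> i)) s"
  proof (intro allI impI)
    fix i assume i: "i < L"
    show "zero_mult_ge l Q (\<alpha> i) (poly H2 (\<alpha> i)) (- poly H1 (\<alpha> i)) s"
      unfolding zmK
    proof (intro allI impI)
      fix u v assume uv: "u + v < s"
      then have "(i,u,v) \<in> I" unfolding I_def using i by auto
      then have "K i (Qf f) u v = K i (Qf g) u v" using fun_cong[OF eq, of "(i,u,v)"] unfolding \<Phi>_def by simp
      then show "K i Q u v = 0" unfolding Q_def[abs_def] Klin by simp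
    qed
  qed
  have wd: "wdeg w1 w2 l Q < int s * T"
  proof -
    let ?A = "{int (degree (Q j)) + w1 * int j + w2 * int (l - j) | j. j \<le> l \<and> Q j \<noteq> 0}"
    have fin: "finite ?A"
      by (rule finite_subset[of _ "(\<lambda>j. int (degree (Q j)) + w1 * int j + w2 * int (l - j)) ` {..l}"]) auto
    have ne: "?A \<noteq> {}" using hz unfolding hnonzero_def by blast
    have "a < int s * T" if aA: "a \<in> ?A" for a
    proof -
      obtain j where j: "a = int (degree (Q j)) + w1 * int j + w2 * int (l - j)" "j \<le> l" "Q j \<noteq> 0"
        using aA by blast
      have "coeff (Q j) (degree (Q j)) \<noteq> 0" using j(3) by simp
      then have "degree (Q j) < nat (e j)" using cQ[of j "degree (Q j)"] by (auto split: if_splits)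
      then have "int (degree (Q j)) < e j" by linarith
      then show ?thesis unfolding j(1) e_def by linarith
    qed
    then show ?thesis unfolding wdeg_def using Max_less_iff[OF fin ne] by blast
  qed
  show ?thesis using hz zm wd by blast
qed


theorem proposition2:
  fixes n k :: nat and d :: int
    and alpha v c r :: "nat \<Rightarrow> 'a::{finite,field}"
    and H1 H2 A B :: "'a poly"
    and L :: nat and tau tauL :: int
  assumes k_pos: "0 < k" and k_le: "k \<le> n"
    and d_def: "d = int n - int k + 1"
    and alpha_inj: "inj_on alpha {..<n}"
    and v_nz: "\<forall>i<n. v i \<noteq> 0"
    and c_code: "c \<in> GRS n k alpha v"
    and r_vec: "\<forall>i\<ge>n. r i = 0"
    and eps_gt: "2 * int (card {i. i < n \<and> c i \<noteq> r i}) > d"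
    and cop: "coprime H1 H2"
    and Lam: "(\<Prod>i\<in>{i. i < n \<and> c i \<noteq> r i}. [:- alpha i, 1:]) = A * H1 + B * H2"
    and degA: "A \<noteq> 0 \<and> int (degree A) = int (card {i. i < n \<and> c i \<noteq> r i}) - int (degree H1)"
    and degB: "B = 0 \<or> int (degree B) \<le> int (card {i. i < n \<and> c i \<noteq> r i}) - d + int (degree H1)"
    and L_pos: "0 < L" and L_le: "L \<le> n"
    and tau_pos: "0 < tau" and tauL_pos: "0 < tauL"
    and w1_nn: "tau - int (degree H1) \<ge> 0"
    and w2_nn: "tau - d + int (degree H1) \<ge> 0"
    and main: "tauL ^ 2 > int L * (2 * tau - d)"
  shows "(\<exists>s l :: nat. \<exists>Q :: nat \<Rightarrow> 'a poly. 0 < s \<and> 0 < l \<and> hnonzero l Q \<and>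
            (\<forall>i<L. zero_mult_ge l Q (alpha i) (poly H2 (alpha i)) (- poly H1 (alpha i)) s) \<and>
            wdeg (tau - int (degree H1)) (tau - d + int (degree H1)) l Q < int s * tauL)
       \<and> ((int (card {i. i < n \<and> c i \<noteq> r i}) = tau \<and>
            int (card {i. i < L \<and> c i \<noteq> r i}) = tauL) \<longrightarrow>
          (\<forall>s l :: nat. \<forall>Q :: nat \<Rightarrow> 'a poly. (0 < s \<and> 0 < l \<and> hnonzero l Q \<and>
            (\<forall>i<L. zero_mult_ge l Q (alpha i) (poly H2 (alpha i)) (- poly H1 (alpha i)) s) \<and>
            wdeg (tau - int (degree H1)) (tau - d + int (degree H1)) l Q < int s * tauL)
            \<longrightarrow> heval l Q A B = 0))"
  proof -
  define E where "E = {i. i < n \<and> c i \<noteq> r i}"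
  define F where "F = {i. i < L \<and> c i \<noteq> r i}"
  define w1 where "w1 = tau - int (degree H1)"
  define w2 where "w2 = tau - d + int (degree H1)"
  have w1n: "0 \<le> w1" and w2n: "0 \<le> w2" using w1_nn w2_nn unfolding w1_def w2_def by auto
  have W: "w1 + w2 = 2 * tau - d" unfolding w1_def w2_def by simp
  have P1: "\<exists>s l :: nat. \<exists>Q :: nat \<Rightarrow> 'a poly. 0 < s \<and> 0 < l \<and> hnonzero l Q \<and>
            (\<forall>i<L. zero_mult_ge l Q (alpha i) (poly H2 (alpha i)) (- poly H1 (alpha i)) s) \<and>
            wdeg w1 w2 l Q < int s * tauL"
  proof -
    have "tauL^2 > int L * (w1 + w2)" using main W by simp
    then obtain s l :: nat where sl: "0 < s" "0 < l"
      "int L * int s * (int s + 1) < (int l + 1) * (2 * int s * tauL - (w1 + w2) * int l)"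
      using choose_params[of tauL "w1 + w2" L] tauL_pos w1n w2n L_pos by auto
    obtain Q where "hnonzero l Q \<and> (\<forall>i<L. zero_mult_ge l Q (alpha i) (poly H2 (alpha i)) (- poly H1 (alpha i)) s)
          \<and> wdeg w1 w2 l Q < int s * tauL"
      using existence[OF w1n w2n sl(3), of alpha H2 H1] by blast
    then show ?thesis using sl by blast
  qed
  have P2: "\<forall>s l :: nat. \<forall>Q :: nat \<Rightarrow> 'a poly. (0 < s \<and> 0 < l \<and> hnonzero l Q \<and>
            (\<forall>i<L. zero_mult_ge l Q (alpha i) (poly H2 (alpha i)) (- poly H1 (alpha i)) s) \<and>
            wdeg w1 w2 l Q < int s * tauL) \<longrightarrow> heval l Q A B = 0"
    if eps: "int (card E) = tau" and epsL: "int (card F) = tauL"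
  proof (intro allI impI)
    fix s l :: nat and Q :: "nat \<Rightarrow> 'a poly"
    assume asm: "0 < s \<and> 0 < l \<and> hnonzero l Q \<and>
            (\<forall>i<L. zero_mult_ge l Q (alpha i) (poly H2 (alpha i)) (- poly H1 (alpha i)) s) \<and>
            wdeg w1 w2 l Q < int s * tauL"
    show "heval l Q A B = 0"
    proof (rule ccontr)
      assume R: "heval l Q A B \<noteq> 0"
      have finE: "finite E" unfolding E_def by auto
      have FE: "F \<subseteq> E" unfolding F_def E_def using L_le by auto
      have dv: "\<forall>i\<in>F. [:-alpha i,1:]^s dvd heval l Q A B"
      proof
        fix i assume iF: "i \<in> F"
        then have iE: "i \<in> E" using FE by auto
        have "poly (\<Prod>i\<in>E. [:- alpha i, 1:]) (alpha i) = 0"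
          using iE finE by (auto simp: poly_prod prod_zero_iff)
        then have root: "poly A (alpha i) * poly H1 (alpha i) + poly B (alpha i) * poly H2 (alpha i) = 0"
          using Lam unfolding E_def by simp
        have "zero_mult_ge l Q (alpha i) (poly H2 (alpha i)) (- poly H1 (alpha i)) s"
          using asm iF unfolding F_def by auto
        then show "[:-alpha i,1:]^s dvd heval l Q A B" by (rule part2_dvd[OF cop root])
      qed
      have inj: "inj_on alpha F" using alpha_inj by (rule inj_on_subset) (use FE in \<open>auto simp: E_def\<close>)
      have finF: "finite F" unfolding F_def by auto
      have d1: "s * card F \<le> degree (heval l Q A B)"
        using roots_degree[OF R finF inj _ dv] asm by auto
      have dA: "int (degree A) \<le> w1" using degA eps unfolding w1_def E_def by simp
      have dB: "int (degree B) \<le> w2"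
      proof (cases "B = 0")
        case True then show ?thesis using w2n by simp
      next
        case False then show ?thesis using degB eps unfolding w2_def E_def by simp
      qed
      have d2: "int (degree (heval l Q A B)) \<le> wdeg w1 w2 l Q"
        using heval_degree[OF _ w1n w2n dA dB] asm by auto
      have "int (s * card F) = int s * tauL" using epsL by simp
      then show False using d1 d2 asm by linarith
    qed
  qed
  show ?thesis using P1 P2 unfolding E_def F_def w1_def w2_def by blast
qed

end
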